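(* There is no finite group that has precisely two cyclic subgroups of order $6$. *)

theory Defs
  imports "HOL-Algebra.Algebra"
begin

definition cyclic_subgroups_of_order :: "('a, 'b) monoid_scheme \<Rightarrow> nat \<Rightarrow> 'a set set" where
  "cyclic_subgroups_of_order G n =
     {H. subgroup H G \<and> (\<exists>x\<in>carrier G. H = generate G {x}) \<and> card H = n}"

end

theory Submission
  imports Defs
begin

context group
begin

lemma sub_pow_closed:
  assumes "subgroup H G" "x \<in> H" shows "x [^] (n::nat) \<in> H"
proof (induction n)
  case 0 then show ?case using subgroup.one_closed[OF assms(1)] by simp
next
  case (Suc n)
  have "x [^] n \<otimes> x \<in> H" using subgroup.m_closed[OF assms(1) Suc assms(2)] .
  then show ?case by (simp only: nat_pow_Suc)
qed

lemma pow_mod_gen: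
  assumes "x \<in> carrier G" "x [^] (m::nat) = \<one>" shows "x [^] (n::nat) = x [^] (n mod m)"
proof -
  have e: "n = m * (n div m) + n mod m" by simp
  have "x [^] n = x [^] (m * (n div m)) \<otimes> x [^] (n mod m)"
    using assms(1) nat_pow_mult e by metis
  also have "x [^] (m * (n div m)) = (x [^] m) [^] (n div m)"
    using assms(1) nat_pow_pow by metis
  finally show ?thesis using assms by simp
qed

lemma ord6I:
  assumes "x \<in> carrier G" "x [^] (6::nat) = \<one>" "x [^] (2::nat) \<noteq> \<one>" "x [^] (3::nat) \<noteq> \<one>"
  shows "ord x = 6"
proof -
  have d: "ord x dvd 6" "\<not> ord x dvd 2" "\<not> ord x dvd 3" using assms pow_eq_id by auto
  have "ord x \<le> 6" using d(1) dvd_imp_le by auto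
  then have "ord x = 0 \<or> ord x = 1 \<or> ord x = 2 \<or> ord x = 3 \<or> ord x = 4 \<or> ord x = 5 \<or> ord x = 6" by arith
  then show ?thesis using d by auto
qed

lemma ord6_pow:
  assumes "x \<in> carrier G" "ord x = 6"
  shows "x [^] (n::nat) = \<one> \<longleftrightarrow> 6 dvd n"
  using assms pow_eq_id by auto

lemma conj_pow:
  assumes "a \<in> carrier G" "y \<in> carrier G"
  shows "(a \<otimes> y \<otimes> inv a) [^] (n::nat) = a \<otimes> y [^] n \<otimes> inv a"
proof (induction n)
  case 0 then show ?case using assms by simp
next
  case (Suc n)
  have "(a \<otimes> y \<otimes> inv a) [^] Suc n = (a \<otimes> y [^] n \<otimes> inv a) \<otimes> (a \<otimes> y \<otimes> inv a)"
    using Suc by (simp add: nat_pow_Suc)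
  also have "\<dots> = a \<otimes> (y [^] n \<otimes> y) \<otimes> inv a"
    using assms by (simp add: m_assoc[symmetric]) (simp add: m_assoc)
  finally show ?case by (simp add: nat_pow_Suc)
qed

lemma conj_eq:
  assumes "a \<in> carrier G" "y \<in> carrier G" "z \<in> carrier G"
  shows "a \<otimes> y \<otimes> inv a = z \<longleftrightarrow> a \<otimes> y = z \<otimes> a"
  using assms by (metis inv_solve_right' m_closed)


lemma sub_cancel_l:
  assumes "subgroup H G" "x \<in> carrier G" "y \<in> carrier G" "x \<otimes> y \<in> H" "x \<in> H"
  shows "y \<in> H"
proof -
  have "y = inv x \<otimes> (x \<otimes> y)" using assms(2,3) by (simp add: m_assoc[symmetric])
  then show ?thesis using assms subgroup.m_closed subgroup.m_inv_closed by metis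
qed

lemma sub_cancel_r:
  assumes "subgroup H G" "x \<in> carrier G" "y \<in> carrier G" "x \<otimes> y \<in> H" "y \<in> H"
  shows "x \<in> H"
proof -
  have "x = (x \<otimes> y) \<otimes> inv y" using assms(2,3) by (simp add: m_assoc)
  then show ?thesis using assms subgroup.m_closed subgroup.m_inv_closed by metis
qed

lemma pow2: "x \<in> carrier G \<Longrightarrow> x [^] (2::nat) = x \<otimes> x"
  by (simp add: numeral_2_eq_2)

lemma gen23:
  assumes "subgroup H G" "x \<in> carrier G" "x [^] (2::nat) \<in> H" "x [^] (3::nat) \<in> H"
  shows "x \<in> H"
proof -
  have "x [^] (3::nat) = x [^] (2::nat) \<otimes> x"
    using assms(2) nat_pow_mult[of x 2 1] by simp
  then show ?thesis using sub_cancel_l[OF assms(1), of "x [^] (2::nat)" x] assms by simp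
qed

lemma comm_r: "x \<otimes> y = y \<otimes> x \<Longrightarrow> x \<in> carrier G \<Longrightarrow> y \<in> carrier G \<Longrightarrow> x \<otimes> y [^] (n::nat) = y [^] n \<otimes> x"
  using group_commutes_pow[of y x n] by simp

lemma comm_prod_r:
  assumes "x \<otimes> y = y \<otimes> x" "x \<otimes> z = z \<otimes> x" "x \<in> carrier G" "y \<in> carrier G" "z \<in> carrier G"
  shows "x \<otimes> (y \<otimes> z) = (y \<otimes> z) \<otimes> x"
proof -
  have "x \<otimes> (y \<otimes> z) = (x \<otimes> y) \<otimes> z" using assms(3-5) by (simp add: m_assoc)
  also have "\<dots> = (y \<otimes> x) \<otimes> z" using assms(1) by simp
  also have "\<dots> = y \<otimes> (x \<otimes> z)" using assms(3-5) by (simp add: m_assoc)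
  also have "\<dots> = y \<otimes> (z \<otimes> x)" using assms(2) by simp
  also have "\<dots> = (y \<otimes> z) \<otimes> x" using assms(3-5) by (simp add: m_assoc)
  finally show ?thesis .
qed

lemma conj_facts:
  assumes a: "a \<in> carrier G" "ord a = 6" and b: "b \<in> carrier G" "ord b = 6"
    and subA: "subgroup A G" and aA: "a \<in> A" and nbA: "b \<in> A \<Longrightarrow> False"
    and cover: "\<And>x. x \<in> carrier G \<Longrightarrow> ord x = 6 \<Longrightarrow> x \<in> A \<or> x \<in> generate G {b}"
  shows "a [^] (2::nat) \<otimes> b = b \<otimes> a [^] (2::nat)" "a \<otimes> b [^] (3::nat) = b [^] (3::nat) \<otimes> a"
proof -
  define c where "c = a \<otimes> b \<otimes> inv a"
  have cc: "c \<in> carrier G" using a b c_def by simp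
  have cp: "\<And>n::nat. c [^] n = a \<otimes> b [^] n \<otimes> inv a" unfolding c_def using conj_pow a b by simp
  have cz: "y = \<one>" if y: "y \<in> carrier G" and h: "a \<otimes> y \<otimes> inv a = \<one>" for y
  proof -
    have "a \<otimes> y = \<one> \<otimes> a" using conj_eq[OF a(1) y one_closed] h by blast
    then have "a \<otimes> y = a \<otimes> \<one>" using a by simp
    then show ?thesis by (rule l_cancel[OF _ y one_closed a(1)])
  qed
  have bp: "\<And>n::nat. b [^] n = \<one> \<longleftrightarrow> 6 dvd n" using ord6_pow b by simp
  have "ord c = 6"
  proof (rule ord6I[OF cc])
    show "c [^] (6::nat) = \<one>" using cp[of 6] bp[of 6] a b by simp
    show "c [^] (2::nat) \<noteq> \<one>"
    proof
      assume "c [^] (2::nat) = \<one>"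
      then have "a \<otimes> b [^] (2::nat) \<otimes> inv a = \<one>" using cp[of 2] by simp
      then have "b [^] (2::nat) = \<one>" using cz[of "b [^] (2::nat)"] b by simp
      then show False using bp[of 2] by simp
    qed
    show "c [^] (3::nat) \<noteq> \<one>"
    proof
      assume "c [^] (3::nat) = \<one>"
      then have "a \<otimes> b [^] (3::nat) \<otimes> inv a = \<one>" using cp[of 3] by simp
      then have "b [^] (3::nat) = \<one>" using cz[of "b [^] (3::nat)"] b by simp
      then show False using bp[of 3] by simp
    qed
  qed
  then have "c \<in> A \<or> c \<in> generate G {b}" using cover cc by blast
  moreover have "c \<notin> A"
  proof
    assume "c \<in> A"
    have "c \<otimes> a = a \<otimes> b" using conj_eq[of a b c] a b cc c_def by simp
    then have "a \<otimes> b \<in> A" using \<open>c \<in> A\<close> aA subA subgroup.m_closed by metis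
    then show False using sub_cancel_l[OF subA a(1) b(1)] aA nbA by blast
  qed
  ultimately have "c \<in> generate G {b}" by blast
  then obtain k :: nat where "c = b [^] k" using generate_pow_nat[OF b(1)] b by auto
  then have ck: "c = b [^] (k mod 6)" using pow_mod_gen[OF b(1), of 6 k] bp by simp
  have c2: "c [^] (2::nat) \<noteq> \<one>" and c3: "c [^] (3::nat) \<noteq> \<one>" using \<open>ord c = 6\<close> ord6_pow cc by auto
  have k6: "k mod 6 < 6" by simp
  have cpk: "\<And>n::nat. c [^] n = b [^] ((k mod 6) * n)" using ck b nat_pow_pow by simp
  have "k mod 6 = 1 \<or> k mod 6 = 5"
  proof -
    have "k mod 6 \<noteq> 0"
    proof
      assume "k mod 6 = 0"
      then have "c = \<one>" using ck by simp
      then show False using c2 by simp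
    qed
    moreover have "k mod 6 \<noteq> 2"
    proof
      assume "k mod 6 = 2"
      then have "c [^] (3::nat) = b [^] (6::nat)" using cpk[of 3] by simp
      then show False using c3 bp[of 6] by simp
    qed
    moreover have "k mod 6 \<noteq> 3"
    proof
      assume "k mod 6 = 3"
      then have "c [^] (2::nat) = b [^] (6::nat)" using cpk[of 2] by simp
      then show False using c2 bp[of 6] by simp
    qed
    moreover have "k mod 6 \<noteq> 4"
    proof
      assume "k mod 6 = 4"
      then have "c [^] (3::nat) = b [^] (12::nat)" using cpk[of 3] by simp
      then show False using c3 bp[of 12] by simp
    qed
    ultimately show ?thesis using k6 by arith
  qed
  then have "a [^] (2::nat) \<otimes> b = b \<otimes> a [^] (2::nat) \<and> a \<otimes> b [^] (3::nat) = b [^] (3::nat) \<otimes> a"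
  proof (elim disjE)
    assume "k mod 6 = 1"
    then have "c = b" using ck b by simp
    then have ab: "a \<otimes> b = b \<otimes> a" using conj_eq[of a b b] a b c_def by simp
    have "a [^] (2::nat) \<otimes> b = b \<otimes> a [^] (2::nat)" using group_commutes_pow[OF ab] a b by simp
    moreover have "a \<otimes> b [^] (3::nat) = b [^] (3::nat) \<otimes> a" using comm_r[OF ab] a b by simp
    ultimately show ?thesis by blast
  next
    assume k5: "k mod 6 = 5"
    have "c [^] (3::nat) = b [^] (3::nat)"
      using cpk[of 3] k5 pow_mod_gen[OF b(1), of 6 15] bp by simp
    then have "a \<otimes> b [^] (3::nat) \<otimes> inv a = b [^] (3::nat)" using cp by simp
    then have q: "a \<otimes> b [^] (3::nat) = b [^] (3::nat) \<otimes> a" using conj_eq a b by simp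
    have "c [^] (5::nat) = b" using cpk[of 5] k5 pow_mod_gen[OF b(1), of 6 25] bp b by simp
    then have "a \<otimes> b [^] (5::nat) \<otimes> inv a = b" using cp by simp
    then have e1: "a \<otimes> b [^] (5::nat) = b \<otimes> a" using conj_eq a b by simp
    have "a \<otimes> b \<otimes> inv a = b [^] (5::nat)" using ck k5 c_def by simp
    then have e2: "a \<otimes> b = b [^] (5::nat) \<otimes> a" using conj_eq a b by simp
    have "a [^] (2::nat) \<otimes> b = a \<otimes> (a \<otimes> b)" using a b pow2 by (simp add: m_assoc)
    also have "\<dots> = (a \<otimes> b [^] (5::nat)) \<otimes> a" using e2 a b by (simp add: m_assoc)
    also have "\<dots> = b \<otimes> a [^] (2::nat)" using e1 a b pow2 by (simp add: m_assoc)
    finally show ?thesis using q by blast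
  qed
  then show "a [^] (2::nat) \<otimes> b = b \<otimes> a [^] (2::nat)" "a \<otimes> b [^] (3::nat) = b [^] (3::nat) \<otimes> a" by blast+
qed


lemma main6:
  assumes fin: "finite (carrier G)"
    and a: "a \<in> carrier G" "ord a = 6" and b: "b \<in> carrier G" "ord b = 6"
    and AB: "generate G {a} \<noteq> generate G {b}"
    and cover: "\<And>x. x \<in> carrier G \<Longrightarrow> ord x = 6 \<Longrightarrow> x \<in> generate G {a} \<or> x \<in> generate G {b}"
  shows False
proof -
  define A where "A = generate G {a}"
  define B where "B = generate G {b}"
  have subA: "subgroup A G" unfolding A_def using generate_is_subgroup a by simp
  have subB: "subgroup B G" unfolding B_def using generate_is_subgroup b by simp
  have aA: "a \<in> A" unfolding A_def by (rule generate.incl) simp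
  have bB: "b \<in> B" unfolding B_def by (rule generate.incl) simp
  have cA: "card A = 6" unfolding A_def using generate_pow_card a by simp
  have cB: "card B = 6" unfolding B_def using generate_pow_card b by simp
  have fA: "finite A" using fin subA subgroup.subset finite_subset by metis
  have fB: "finite B" using fin subB subgroup.subset finite_subset by metis
  have nbA: "b \<in> A \<Longrightarrow> False"
  proof -
    assume h: "b \<in> A"
    have "B \<subseteq> A" unfolding B_def using generate_subgroup_incl[of "{b}" A] subA h by blast
    then have "B = A" using card_subset_eq[OF fA] cA cB by simp
    then show False using AB A_def B_def by simp
  qed
  have naB: "a \<in> B \<Longrightarrow> False"
  proof -
    assume h: "a \<in> B"
    have "A \<subseteq> B" unfolding A_def using generate_subgroup_incl[of "{a}" B] subB h by blast
    then have "A = B" using card_subset_eq[OF fB] cA cB by simp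
    then show False using AB A_def B_def by simp
  qed
  have cov: "\<And>x. x \<in> carrier G \<Longrightarrow> ord x = 6 \<Longrightarrow> x \<in> A \<or> x \<in> B"
    using cover A_def B_def by simp
  have ap: "\<And>n::nat. a [^] n = \<one> \<longleftrightarrow> 6 dvd n" using ord6_pow a by simp
  have bp: "\<And>n::nat. b [^] n = \<one> \<longleftrightarrow> 6 dvd n" using ord6_pow b by simp
  have pair: "(u \<in> A \<and> v \<in> A) \<or> (u \<in> B \<and> v \<in> B)"
    if u: "u \<in> carrier G" "u [^] (3::nat) = \<one>" "u \<noteq> \<one>"
    and v: "v \<in> carrier G" "v [^] (2::nat) = \<one>" "v \<noteq> \<one>"
    and uv: "u \<otimes> v = v \<otimes> u" for u v
  proof -
    define x where "x = u \<otimes> v"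
    have xc: "x \<in> carrier G" using x_def u v by simp
    have xp: "\<And>n::nat. x [^] n = u [^] n \<otimes> v [^] n" using x_def pow_mult_distrib uv u v by simp
    have u2: "u [^] (2::nat) \<noteq> \<one>"
    proof
      assume "u [^] (2::nat) = \<one>"
      then have "u [^] (3::nat) = u [^] (3 mod 2::nat)" using pow_mod_gen[OF u(1)] by blast
      then show False using u by simp
    qed
    have "ord x = 6"
    proof (rule ord6I[OF xc])
      show "x [^] (6::nat) = \<one>" using xp[of 6] pow_mod_gen[OF u(1,2), of 6] pow_mod_gen[OF v(1,2), of 6] u v by simp
      show "x [^] (2::nat) \<noteq> \<one>" using xp[of 2] pow_mod_gen[OF v(1,2), of 2] u2 u v by simp
      show "x [^] (3::nat) \<noteq> \<one>" using xp[of 3] pow_mod_gen[OF v(1,2), of 3] u v by simp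
    qed
    then have "x \<in> A \<or> x \<in> B" using cov xc by blast
    moreover have "x [^] (4::nat) = u" using xp[of 4] pow_mod_gen[OF u(1,2), of 4] pow_mod_gen[OF v(1,2), of 4] u v by simp
    moreover have "x [^] (3::nat) = v" using xp[of 3] pow_mod_gen[OF v(1,2), of 3] u v by simp
    ultimately show ?thesis using sub_pow_closed[OF subA, of x 4] sub_pow_closed[OF subA, of x 3] sub_pow_closed[OF subB, of x 4] sub_pow_closed[OF subB, of x 3] by auto
  qed
  have covB: "\<And>x. x \<in> carrier G \<Longrightarrow> ord x = 6 \<Longrightarrow> x \<in> A \<or> x \<in> generate G {b}"
    using cov B_def by simp
  have covA: "\<And>x. x \<in> carrier G \<Longrightarrow> ord x = 6 \<Longrightarrow> x \<in> B \<or> x \<in> generate G {a}"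
    using cov unfolding A_def by blast
  note cf1 = conj_facts[OF a b subA aA nbA covB]
  note cf2 = conj_facts[OF b a subB bB naB covA]
  note i = cf1(1) and ii = cf1(2) and i' = cf2(1) and ii' = cf2(2)
  have a23: "a [^] (2::nat) \<otimes> a [^] (3::nat) = a [^] (3::nat) \<otimes> a [^] (2::nat)"
    using a by (simp add: nat_pow_mult)
  have b23: "b [^] (2::nat) \<otimes> b [^] (3::nat) = b [^] (3::nat) \<otimes> b [^] (2::nat)"
    using b by (simp add: nat_pow_mult)
  have a2c: "a [^] (2::nat) \<in> carrier G" "a [^] (3::nat) \<in> carrier G" using a by auto
  have b2c: "b [^] (2::nat) \<in> carrier G" "b [^] (3::nat) \<in> carrier G" using b by auto
  have a6: "(a [^] (2::nat)) [^] (3::nat) = \<one>" "(a [^] (3::nat)) [^] (2::nat) = \<one>"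
    using a ap by (simp_all add: nat_pow_pow)
  have b6: "(b [^] (2::nat)) [^] (3::nat) = \<one>" "(b [^] (3::nat)) [^] (2::nat) = \<one>"
    using b bp by (simp_all add: nat_pow_pow)
  have an: "a [^] (2::nat) \<noteq> \<one>" "a [^] (3::nat) \<noteq> \<one>" using ap by auto
  have bn: "b [^] (2::nat) \<noteq> \<one>" "b [^] (3::nat) \<noteq> \<one>" using bp by auto
  have na: "\<not> (a [^] (2::nat) \<in> B \<and> a [^] (3::nat) \<in> B)" using gen23[OF subB a(1)] naB by blast
  have nb: "\<not> (b [^] (2::nat) \<in> A \<and> b [^] (3::nat) \<in> A)" using gen23[OF subA b(1)] nbA by blast
  have i3: "a [^] (2::nat) \<otimes> b [^] (3::nat) = b [^] (3::nat) \<otimes> a [^] (2::nat)"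
    using comm_r[OF i a2c(1) b(1), of 3] .
  have P1: "b [^] (3::nat) \<in> A \<or> a [^] (2::nat) \<in> B"
    using pair[OF a2c(1) a6(1) an(1) b2c(2) b6(2) bn(2) i3] by blast
  have i3': "b [^] (2::nat) \<otimes> a [^] (3::nat) = a [^] (3::nat) \<otimes> b [^] (2::nat)"
    using comm_r[OF i' b2c(1) a(1), of 3] .
  have P2: "a [^] (3::nat) \<in> B \<or> b [^] (2::nat) \<in> A"
    using pair[OF b2c(1) b6(1) bn(1) a2c(2) a6(2) an(2) i3'] by blast
  show False
  proof (cases "a [^] (2::nat) \<in> B \<and> b [^] (2::nat) \<in> A")
    case True
    define v where "v = a [^] (3::nat) \<otimes> b [^] (3::nat)"
    have vc: "v \<in> carrier G" using v_def a b by simp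
    have c33: "a [^] (3::nat) \<otimes> b [^] (3::nat) = b [^] (3::nat) \<otimes> a [^] (3::nat)"
      using group_commutes_pow[OF ii a(1) b2c(2), where n=3] .
    have v2: "v [^] (2::nat) = \<one>" using v_def pow_mult_distrib[OF c33 a2c(2) b2c(2)] a6 b6 by simp
    have v1: "v \<noteq> \<one>"
    proof
      assume "v = \<one>"
      then have "b [^] (3::nat) = inv (a [^] (3::nat))" using v_def a2c b2c inv_equality[of "b [^] (3::nat)" "a [^] (3::nat)"] c33 by simp
      then have "b [^] (3::nat) \<in> A" using sub_pow_closed[OF subA aA] subgroup.m_inv_closed[OF subA] by simp
      then show False using nb True by blast
    qed
    have uv: "a [^] (2::nat) \<otimes> v = v \<otimes> a [^] (2::nat)"
      unfolding v_def using comm_prod_r[OF a23 i3] a2c b2c by simp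
    have "(a [^] (2::nat) \<in> A \<and> v \<in> A) \<or> (a [^] (2::nat) \<in> B \<and> v \<in> B)"
      using pair[OF a2c(1) a6(1) an(1) vc v2 v1 uv] .
    then show False
    proof
      assume "a [^] (2::nat) \<in> A \<and> v \<in> A"
      then have "b [^] (3::nat) \<in> A" using sub_cancel_l[OF subA a2c(2) b2c(2)] v_def sub_pow_closed[OF subA aA] by simp
      then show False using nb True by blast
    next
      assume "a [^] (2::nat) \<in> B \<and> v \<in> B"
      then have "a [^] (3::nat) \<in> B" using sub_cancel_r[OF subB a2c(2) b2c(2)] v_def sub_pow_closed[OF subB bB] by simp
      then show False using na True by blast
    qed
  next
    case False
    then have T: "b [^] (3::nat) \<in> A" "a [^] (3::nat) \<in> B" using P1 P2 na nb by blast+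
    define u where "u = a [^] (2::nat) \<otimes> b [^] (2::nat)"
    have uc: "u \<in> carrier G" using u_def a b by simp
    have c22: "a [^] (2::nat) \<otimes> b [^] (2::nat) = b [^] (2::nat) \<otimes> a [^] (2::nat)"
      using comm_r[OF i a2c(1) b(1), of 2] .
    have u3: "u [^] (3::nat) = \<one>" using u_def pow_mult_distrib[OF c22 a2c(1) b2c(1)] a6 b6 by simp
    have u1: "u \<noteq> \<one>"
    proof
      assume "u = \<one>"
      then have "b [^] (2::nat) = inv (a [^] (2::nat))" using u_def a2c b2c inv_equality[of "b [^] (2::nat)" "a [^] (2::nat)"] c22 by simp
      then have "b [^] (2::nat) \<in> A" using sub_pow_closed[OF subA aA] subgroup.m_inv_closed[OF subA] by simp
      then show False using nb T by blast
    qed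
    have b2a3: "b [^] (2::nat) \<otimes> a [^] (3::nat) = a [^] (3::nat) \<otimes> b [^] (2::nat)"
      using group_commutes_pow[OF i'[symmetric] a(1) b2c(1), where n=3] by (rule sym)
    have uv: "u \<otimes> a [^] (3::nat) = a [^] (3::nat) \<otimes> u"
      unfolding u_def using comm_prod_r[OF a23[symmetric] b2a3[symmetric]] a2c b2c by simp
    have "(u \<in> A \<and> a [^] (3::nat) \<in> A) \<or> (u \<in> B \<and> a [^] (3::nat) \<in> B)"
      using pair[OF uc u3 u1 a2c(2) a6(2) an(2) uv] .
    then show False
    proof
      assume "u \<in> A \<and> a [^] (3::nat) \<in> A"
      then have "b [^] (2::nat) \<in> A" using sub_cancel_l[OF subA a2c(1) b2c(1)] u_def sub_pow_closed[OF subA aA] by simp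
      then show False using nb T by blast
    next
      assume "u \<in> B \<and> a [^] (3::nat) \<in> B"
      then have "a [^] (2::nat) \<in> B" using sub_cancel_r[OF subB a2c(1) b2c(1)] u_def sub_pow_closed[OF subB bB] by simp
      then show False using na T by blast
    qed
  qed
qed

end

theorem lemma3p1:
  fixes G :: "('a, 'b) monoid_scheme"
  assumes "group G" and "finite (carrier G)"
  shows "card (cyclic_subgroups_of_order G 6) \<noteq> 2"
proof
  interpret group G by fact
  assume "card (cyclic_subgroups_of_order G 6) = 2"
  then obtain A B where AB: "A \<noteq> B" "cyclic_subgroups_of_order G 6 = {A, B}"
    using card_2_iff by metis
  have "A \<in> cyclic_subgroups_of_order G 6" using AB by simp
  then obtain a where a: "a \<in> carrier G" "A = generate G {a}" "card A = 6"
    unfolding cyclic_subgroups_of_order_def by blast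
  have "B \<in> cyclic_subgroups_of_order G 6" using AB by simp
  then obtain b where b: "b \<in> carrier G" "B = generate G {b}" "card B = 6"
    unfolding cyclic_subgroups_of_order_def by blast
  have oa: "ord a = 6" using generate_pow_card[OF a(1)] a by simp
  have ob: "ord b = 6" using generate_pow_card[OF b(1)] b by simp
  have cover: "x \<in> generate G {a} \<or> x \<in> generate G {b}" if x: "x \<in> carrier G" "ord x = 6" for x
  proof -
    have "subgroup (generate G {x}) G" using generate_is_subgroup x by simp
    moreover have "card (generate G {x}) = 6" using generate_pow_card[OF x(1)] x by simp
    ultimately have "generate G {x} \<in> cyclic_subgroups_of_order G 6"
      unfolding cyclic_subgroups_of_order_def using x by blast
    then have "generate G {x} = A \<or> generate G {x} = B" using AB by simp
    moreover have "x \<in> generate G {x}" by (rule generate.incl) simp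
    ultimately show ?thesis using a b by blast
  qed
  show False using main6[OF assms(2) a(1) oa b(1) ob _ cover] AB a b by simp
qed

end
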